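(* Let $X$ and $X'$ be $3$-dimensional locally standard $T^1$-pseudomanifolds over $2$-stratifolds (i.e. $(l,m,n)=(1,1,1)$), with characteristic data $(Q,\{1,T\},0)$ and $(Q',\{1,T\},0)$. Then these data are (weakly) isomorphic — equivalently, there exists a stratified homeomorphism $Q\to Q'$ — if and only if $X$ and $X'$ are (weakly) $T^1$-equivariantly homeomorphic.
   Context: Notation: $U(1)=\{z\in\mathbb C:|z|=1\}$, $T^m=U(1)^m$, $\mathbb C^\times=\mathbb C\setminus\{0\}$, open cone $\mathring c(L)=L\times[0,1)/(L\times\{0\})$ ($\mathring c(\emptyset)$ a point). A topological stratified pseudomanifold is a Hausdorff space $Q$ with closed filtration $Q=Q_{l+n}\supsetneq\cdots\supsetneq Q_l\supsetneq\emptyset$ whose strata (components of $Q_i\setminus Q_{i-1}$) are $i$-manifolds, with $\mathring Q=Q_{l+n}\setminus Q_{l+n-1}$ dense, and each point $p$ of an $(l+i)$-stratum having a filtration-preserving neighborhood $O\times\mathring c(L_p)$, $O\subset\mathbb R^{l+i}$ contractible open, $L_p$ a compact $(n-i-1)$-dimensional topological stratified pseudomanifold (the link). Locally standard $T^m$-pseudomanifold $X$ (dimension $l+m+n$, $l\ge0$, $m\ge n\ge0$): a second-countable compact Hausdorff space with effective continuous $T^m$-action with subtorus isotropy groups, filtered by $X_{l+2i+(m-n)}=X_{l+2i+1+(m-n)}=\{x:\dim T^mx\le i+m-n\}$ ($0\le i\le n$), which is a topological stratified pseudomanifold with no orbits of dimension $<m-n$ and with free orbits if $l+n\ne0$, and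 inductively: if $l+n=0$, $X$ is a finite disjoint union of copies of $T^m$; otherwise each $x\in X_{l+2i+(m-n)}\setminus X_{l+2(i-1)+(m-n)}$ has an invariant open neighborhood weakly equivariantly homeomorphic to $O\times(\Omega\times U(1)^{m-n})\times\mathring c(L_x)$ with $O\subset\mathbb R^l$ contractible open, $\Omega\subset(\mathbb C^\times)^i$ invariant open, $L_x$ a compact $(2n-2i-1)$-dimensional locally standard $T_x$-pseudomanifold ($T_x\cong T^{n-i}$ the isotropy group), $T^m\cong U(1)^{i+m-n}\times T_x$ acting freely on the middle factor and via $L_x$ on the cone. The orbit space $Q=X/T^m$ with filtration $Q_{l+i}=X_{l+2i+(m-n)}/T^m$ is a topological stratified pseudomanifold of dimension $l+n$. When $(l,n)=(1,1)$, $Q$ (filtration $Q_2\supset Q_1\supset\emptyset$) is called a $2$-stratifold; for $m=1$ the characteristic functor $\{1,T\}$ assigns the trivial group to $2$-strata and $T^1$ to $1$-strata, and the Chern class of the free part is $0$. A stratified homeomorphism is a homeomorphism carrying strata onto strata and preserving the filtration; a weak isomorphism of data additionally allows an automorphism of $T^1$ (here only $t\mapsto t^{\pm1}$), an isomorphism requires the identity. A weak equivariant homeomorphism is a homeomorphism $F$ with $F(tx)=\psi(t)F(x)$ for some automorphism $\psi$. *)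

theory Defs
  imports "HOL-Analysis.Analysis"
begin

abbreviation U1 :: "complex set" where "U1 \<equiv> sphere 0 1"

definition torus_aut :: "(complex \<Rightarrow> complex) \<Rightarrow> bool" where
  "torus_aut \<psi> \<longleftrightarrow> continuous_on U1 \<psi> \<and> bij_betw \<psi> U1 U1 \<and>
     (\<forall>s\<in>U1. \<forall>t\<in>U1. \<psi> (s * t) = \<psi> s * \<psi> t)"

definition U1_action :: "'a topology \<Rightarrow> (complex \<Rightarrow> 'a \<Rightarrow> 'a) \<Rightarrow> bool" where
  "U1_action X act \<longleftrightarrow>
     continuous_map (prod_topology (top_of_set U1) X) X (\<lambda>(t, x). act t x) \<and>
     (\<forall>x\<in>topspace X. act 1 x = x) \<and>
     (\<forall>s\<in>U1. \<forall>t\<in>U1. \<forall>x\<in>topspace X. act (s * t) x = act s (act t x))"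

definition stabilizer :: "(complex \<Rightarrow> 'a \<Rightarrow> 'a) \<Rightarrow> 'a \<Rightarrow> complex set" where
  "stabilizer act x = {t \<in> U1. act t x = x}"

definition orbit :: "(complex \<Rightarrow> 'a \<Rightarrow> 'a) \<Rightarrow> 'a \<Rightarrow> 'a set" where
  "orbit act x = (\<lambda>t. act t x) ` U1"

definition invariant_set :: "(complex \<Rightarrow> 'a \<Rightarrow> 'a) \<Rightarrow> 'a set \<Rightarrow> bool" where
  "invariant_set act W \<longleftrightarrow> (\<forall>t\<in>U1. \<forall>x\<in>W. act t x \<in> W)"

definition weak_equiv_homeo ::
  "'a topology \<Rightarrow> (complex \<Rightarrow> 'a \<Rightarrow> 'a) \<Rightarrow> 'b topology \<Rightarrow> (complex \<Rightarrow> 'b \<Rightarrow> 'b) \<Rightarrow> ('a \<Rightarrow> 'b) \<Rightarrow> bool"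
  where
  "weak_equiv_homeo X act Y act' F \<longleftrightarrow> homeomorphic_map X Y F \<and>
     (\<exists>\<psi>. torus_aut \<psi> \<and> (\<forall>t\<in>U1. \<forall>x\<in>topspace X. F (act t x) = act' (\<psi> t) (F x)))"

definition equiv_homeo ::
  "'a topology \<Rightarrow> (complex \<Rightarrow> 'a \<Rightarrow> 'a) \<Rightarrow> 'b topology \<Rightarrow> (complex \<Rightarrow> 'b \<Rightarrow> 'b) \<Rightarrow> ('a \<Rightarrow> 'b) \<Rightarrow> bool"
  where
  "equiv_homeo X act Y act' F \<longleftrightarrow> homeomorphic_map X Y F \<and>
     (\<forall>t\<in>U1. \<forall>x\<in>topspace X. F (act t x) = act' t (F x))"

text \<open>Quotient topology of X with respect to a partition P of its carrier; the points of
  the quotient are the blocks of the partition.\<close>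
definition quot_top :: "'a topology \<Rightarrow> 'a set set \<Rightarrow> 'a set topology" where
  "quot_top X P = topology (\<lambda>U. U \<subseteq> P \<and> openin X (\<Union>U))"

text \<open>Open cone L \<times> [0,1) / L \<times> {0}.  (For empty L this is a single point, the block {}.)\<close>
definition cone_blocks :: "'a set \<Rightarrow> ('a \<times> real) set set" where
  "cone_blocks S = {{(x, s)} | x s. x \<in> S \<and> 0 < s \<and> s < 1} \<union> {S \<times> {0}}"

definition open_cone :: "'a topology \<Rightarrow> ('a \<times> real) set topology" where
  "open_cone L = quot_top (prod_topology L (top_of_set {0..<1})) (cone_blocks (topspace L))"

definition cone_act :: "(complex \<Rightarrow> 'a \<Rightarrow> 'a) \<Rightarrow> complex \<Rightarrow> ('a \<times> real) set \<Rightarrow> ('a \<times> real) set" where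
  "cone_act act t C = (\<lambda>(x, s). (act t x, s)) ` C"

text \<open>The orbit space X/U(1) and its filtration: Q_1 = orbits of fixed points, Q_2 = Q.\<close>
definition orbits :: "'a topology \<Rightarrow> (complex \<Rightarrow> 'a \<Rightarrow> 'a) \<Rightarrow> 'a set set" where
  "orbits X act = {orbit act x | x. x \<in> topspace X}"

definition orbit_space :: "'a topology \<Rightarrow> (complex \<Rightarrow> 'a \<Rightarrow> 'a) \<Rightarrow> 'a set topology" where
  "orbit_space X act = quot_top X (orbits X act)"

definition fixed_points :: "'a topology \<Rightarrow> (complex \<Rightarrow> 'a \<Rightarrow> 'a) \<Rightarrow> 'a set" where
  "fixed_points X act = {x \<in> topspace X. stabilizer act x = U1}"

definition free_points :: "'a topology \<Rightarrow> (complex \<Rightarrow> 'a \<Rightarrow> 'a) \<Rightarrow> 'a set" where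
  "free_points X act = {x \<in> topspace X. stabilizer act x = {1}}"

definition orbit_filtration :: "'a topology \<Rightarrow> (complex \<Rightarrow> 'a \<Rightarrow> 'a) \<Rightarrow> nat \<Rightarrow> 'a set set" where
  "orbit_filtration X act i =
     (if i = 0 then {} else if i = 1 then orbit act ` fixed_points X act else orbits X act)"

text \<open>Stratified homeomorphism: homeomorphism carrying each filtration set onto the
  corresponding one (hence strata, i.e. components of Q_i - Q_(i-1), onto strata).\<close>
definition stratified_homeo ::
  "'a topology \<Rightarrow> (nat \<Rightarrow> 'a set) \<Rightarrow> 'b topology \<Rightarrow> (nat \<Rightarrow> 'b set) \<Rightarrow> ('a \<Rightarrow> 'b) \<Rightarrow> bool" where
  "stratified_homeo Q F Q' F' f \<longleftrightarrow> homeomorphic_map Q Q' f \<and> (\<forall>i. f ` F i = F' i)"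

text \<open>Link at a fixed point: compact 1-dimensional locally standard T^1-pseudomanifold,
  i.e. a finite (nonempty) disjoint union of k copies of T^1 = U(1) with the translation action.\<close>
definition circles :: "nat \<Rightarrow> (nat \<times> complex) topology" where
  "circles k = top_of_set ({..<k} \<times> U1)"

definition circles_act :: "complex \<Rightarrow> nat \<times> complex \<Rightarrow> nat \<times> complex" where
  "circles_act t = (\<lambda>(j, z). (j, t * z))"

text \<open>Model at a fixed point (i = 0): Op \<times> c(L_x), Op \<subseteq> R contractible open
  (the factor \<Omega> \<times> U(1)^(m-n) \<subseteq> (C^*)^0 is a point and is omitted).\<close>
definition fixed_model :: "real set \<Rightarrow> nat \<Rightarrow> (real \<times> ((nat \<times> complex) \<times> real) set) topology" where
  "fixed_model Op k = prod_topology (top_of_set Op) (open_cone (circles k))"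

definition fixed_model_act ::
  "complex \<Rightarrow> real \<times> ((nat \<times> complex) \<times> real) set \<Rightarrow> real \<times> ((nat \<times> complex) \<times> real) set" where
  "fixed_model_act t = (\<lambda>(r, C). (r, cone_act circles_act t C))"

text \<open>Model at a free point (i = 1): Op \<times> \<Omega> with \<Omega> \<subseteq> C^* invariant open, U(1) acting
  by multiplication (the cone on the empty link is a point and is omitted).\<close>
definition free_model :: "real set \<Rightarrow> complex set \<Rightarrow> (real \<times> complex) topology" where
  "free_model Op \<Omega> = top_of_set (Op \<times> \<Omega>)"

definition free_model_act :: "complex \<Rightarrow> real \<times> complex \<Rightarrow> real \<times> complex" where
  "free_model_act t = (\<lambda>(r, z). (r, t * z))"

definition locally_standard_T1_over_2stratifold :: "'a topology \<Rightarrow> (complex \<Rightarrow> 'a \<Rightarrow> 'a) \<Rightarrow> bool" where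
  "locally_standard_T1_over_2stratifold X act \<longleftrightarrow>
     second_countable X \<and> compact_space X \<and> Hausdorff_space X \<and>
     U1_action X act \<and>
     \<comment> \<open>effective\<close>
     (\<forall>t\<in>U1. (\<forall>x\<in>topspace X. act t x = x) \<longrightarrow> t = 1) \<and>
     \<comment> \<open>isotropy groups are subtori of T^1, i.e. trivial or all of T^1\<close>
     (\<forall>x\<in>topspace X. stabilizer act x = {1} \<or> stabilizer act x = U1) \<and>
     \<comment> \<open>strict filtration Q_2 \<supset> Q_1 \<supset> {} : free orbits and fixed points exist\<close>
     free_points X act \<noteq> {} \<and> fixed_points X act \<noteq> {} \<and>
     \<comment> \<open>local model at fixed points\<close>
     (\<forall>x\<in>fixed_points X act. \<exists>W Op k F.
         openin X W \<and> x \<in> W \<and> invariant_set act W \<and>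
         open Op \<and> contractible Op \<and> k \<ge> 1 \<and>
         weak_equiv_homeo (subtopology X W) act (fixed_model Op k) fixed_model_act F) \<and>
     \<comment> \<open>local model at free points\<close>
     (\<forall>x\<in>free_points X act. \<exists>W Op \<Omega> F.
         openin X W \<and> x \<in> W \<and> invariant_set act W \<and>
         open Op \<and> contractible Op \<and>
         open \<Omega> \<and> 0 \<notin> \<Omega> \<and> (\<forall>t\<in>U1. \<forall>z\<in>\<Omega>. t * z \<in> \<Omega>) \<and>
         weak_equiv_homeo (subtopology X W) act (free_model Op \<Omega>) free_model_act F)"

text \<open>Chern class of the free part equal to 0: the principal U(1)-bundle
  X_free \<rightarrow> Q_free = X_free / U(1) is trivial, i.e. admits a continuous section.\<close>
definition chern_class_zero :: "'a topology \<Rightarrow> (complex \<Rightarrow> 'a \<Rightarrow> 'a) \<Rightarrow> bool" where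
  "chern_class_zero X act \<longleftrightarrow>
     (\<exists>s. continuous_map (subtopology (orbit_space X act) (orbit act ` free_points X act))
                          (subtopology X (free_points X act)) s \<and>
          (\<forall>C\<in>orbit act ` free_points X act. s C \<in> C))"

end

theory Submission
  imports Defs
begin

definition partition_of :: "'a topology \<Rightarrow> 'a set set \<Rightarrow> bool" where
  "partition_of X P \<longleftrightarrow> \<Union>P = topspace X \<and> (\<forall>A\<in>P. \<forall>B\<in>P. A \<inter> B \<noteq> {} \<longrightarrow> A = B)"

lemma istopology_quot:
  assumes "partition_of X P"
  shows "istopology (\<lambda>U. U \<subseteq> P \<and> openin X (\<Union>U))"
proof -
  have 1: "S \<inter> T \<subseteq> P \<and> openin X (\<Union>(S \<inter> T))"
    if S: "S \<subseteq> P \<and> openin X (\<Union>S)" and T: "T \<subseteq> P \<and> openin X (\<Union>T)" for S T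
  proof -
    have "\<Union>(S \<inter> T) = \<Union>S \<inter> \<Union>T"
    proof
      show "\<Union>S \<inter> \<Union>T \<subseteq> \<Union>(S \<inter> T)"
      proof
        fix x assume "x \<in> \<Union>S \<inter> \<Union>T"
        then obtain A B where AB: "A \<in> S" "B \<in> T" "x \<in> A" "x \<in> B" by blast
        then have "A = B" using assms S T unfolding partition_of_def by blast
        then show "x \<in> \<Union>(S \<inter> T)" using AB by blast
      qed
    qed blast
    then show ?thesis using S T by auto
  qed
  have 2: "\<Union>K \<subseteq> P \<and> openin X (\<Union>(\<Union>K))" if "\<forall>k\<in>K. k \<subseteq> P \<and> openin X (\<Union>k)" for K :: "'a set set set"
  proof -
    have e: "\<Union>(\<Union>K) = \<Union>((\<lambda>k. \<Union>k) ` K)" by blast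
    have "openin X (\<Union>((\<lambda>k. \<Union>k) ` K))" using that by (intro openin_Union) blast
    moreover have "\<Union>K \<subseteq> P" using that by blast
    ultimately show ?thesis unfolding e by simp
  qed
  show ?thesis unfolding istopology_def using 1 2 by blast
qed

lemma openin_quot_top:
  assumes "partition_of X P"
  shows "openin (quot_top X P) U \<longleftrightarrow> U \<subseteq> P \<and> openin X (\<Union>U)"
  using istopology_quot[OF assms] unfolding quot_top_def by simp

lemma topspace_quot_top:
  assumes "partition_of X P"
  shows "topspace (quot_top X P) = P"
proof -
  have "openin (quot_top X P) P" using assms by (simp add: openin_quot_top partition_of_def)
  then have "P \<subseteq> topspace (quot_top X P)" by (rule openin_subset)
  moreover have "topspace (quot_top X P) \<subseteq> P"
    unfolding topspace_def using assms by (auto simp: openin_quot_top)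
  ultimately show ?thesis by blast
qed

lemma U1_inv: "t \<in> U1 \<Longrightarrow> cnj t * t = 1"
  by (simp add: complex_norm_square[symmetric] mult.commute)

lemma U1_cnj: "t \<in> U1 \<Longrightarrow> cnj t \<in> U1" by simp

lemma U1_mult: "s \<in> U1 \<Longrightarrow> t \<in> U1 \<Longrightarrow> s * t \<in> U1" by (simp add: norm_mult)

lemma act_in:
  assumes "U1_action X act" "t \<in> U1" "x \<in> topspace X"
  shows "act t x \<in> topspace X"
proof -
  have "continuous_map (prod_topology (top_of_set U1) X) X (\<lambda>(t, x). act t x)"
    using assms(1) unfolding U1_action_def by blast
  from continuous_map_image_subset_topspace[OF this] assms(2,3) show ?thesis by force
qed

lemma act_mult:
  assumes "U1_action X act" "s \<in> U1" "t \<in> U1" "x \<in> topspace X"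
  shows "act s (act t x) = act (s * t) x"
  using assms unfolding U1_action_def by auto

lemma act_one:
  assumes "U1_action X act" "x \<in> topspace X"
  shows "act 1 x = x"
  using assms unfolding U1_action_def by auto

lemma act_cnj:
  assumes "U1_action X act" "t \<in> U1" "x \<in> topspace X"
  shows "act (cnj t) (act t x) = x"
proof -
  have "act (cnj t) (act t x) = act (cnj t * t) x"
    by (rule act_mult[OF assms(1) U1_cnj[OF assms(2)] assms(2,3)])
  also have "cnj t * t = 1" by (rule U1_inv[OF assms(2)])
  finally show ?thesis using act_one[OF assms(1,3)] by simp
qed

lemma act_cnj2:
  assumes "U1_action X act" "t \<in> U1" "x \<in> topspace X"
  shows "act t (act (cnj t) x) = x"
proof -
  have "act t (act (cnj t) x) = act (t * cnj t) x"
    by (rule act_mult[OF assms(1) assms(2) U1_cnj[OF assms(2)] assms(3)])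
  also have "t * cnj t = 1" using U1_inv[OF assms(2)] by (simp add: mult.commute)
  finally show ?thesis using act_one[OF assms(1,3)] by simp
qed

lemma orbit_sub:
  assumes "U1_action X act" "x \<in> topspace X"
  shows "orbit act x \<subseteq> topspace X"
proof
  fix y assume "y \<in> orbit act x"
  then obtain t where "t \<in> U1" "y = act t x" unfolding orbit_def by blast
  then show "y \<in> topspace X" using act_in[OF assms(1) _ assms(2)] by simp
qed

lemma in_orbit:
  assumes "U1_action X act" "x \<in> topspace X"
  shows "x \<in> orbit act x"
proof -
  have "(1::complex) \<in> U1" by simp
  then have "act 1 x \<in> orbit act x" unfolding orbit_def by (rule imageI)
  then show ?thesis using act_one[OF assms] by simp
qed

lemma orbit_act:
  assumes "U1_action X act" "t \<in> U1" "x \<in> topspace X"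
  shows "orbit act (act t x) = orbit act x"
proof
  show "orbit act (act t x) \<subseteq> orbit act x"
    unfolding orbit_def using act_mult[OF assms(1) _ assms(2,3)] U1_mult[OF _ assms(2)] by auto
  show "orbit act x \<subseteq> orbit act (act t x)"
  proof
    fix y assume "y \<in> orbit act x"
    then obtain u where u: "u \<in> U1" "y = act u x" unfolding orbit_def by auto
    have "act (u * cnj t) (act t x) = act u x"
      using act_mult[OF assms(1) _ assms(2,3)] U1_mult[OF u(1) U1_cnj[OF assms(2)]] U1_inv[OF assms(2)]
      by (simp add: mult.assoc)
    then show "y \<in> orbit act (act t x)" unfolding orbit_def using u U1_mult[OF u(1) U1_cnj[OF assms(2)]]
      by (metis image_eqI)
  qed
qed

lemma orbit_eq:
  assumes "U1_action X act" "x \<in> topspace X" "y \<in> orbit act x"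
  shows "orbit act y = orbit act x"
proof -
  obtain t where t: "t \<in> U1" "y = act t x" using assms(3) unfolding orbit_def by blast
  show ?thesis unfolding t(2) by (rule orbit_act[OF assms(1) t(1) assms(2)])
qed

lemma orbits_iff: "C \<in> orbits X act \<longleftrightarrow> (\<exists>x\<in>topspace X. C = orbit act x)"
  unfolding orbits_def by blast

lemma partition_orbits:
  assumes "U1_action X act"
  shows "partition_of X (orbits X act)"
  unfolding partition_of_def
proof (intro conjI ballI impI)
  show "\<Union>(orbits X act) = topspace X"
  proof
    show "\<Union>(orbits X act) \<subseteq> topspace X"
    proof
      fix y assume "y \<in> \<Union>(orbits X act)"
      then obtain C where C: "C \<in> orbits X act" "y \<in> C" by blast
      then obtain x where "x \<in> topspace X" "C = orbit act x" using orbits_iff by metis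
      then show "y \<in> topspace X" using orbit_sub[OF assms] C(2) by blast
    qed
    show "topspace X \<subseteq> \<Union>(orbits X act)"
    proof
      fix x assume x: "x \<in> topspace X"
      then have "orbit act x \<in> orbits X act" using orbits_iff by metis
      then show "x \<in> \<Union>(orbits X act)" using in_orbit[OF assms x] by blast
    qed
  qed
  fix A B
  assume AB: "A \<in> orbits X act" "B \<in> orbits X act" "A \<inter> B \<noteq> {}"
  obtain x where x: "x \<in> topspace X" "A = orbit act x" using AB(1) orbits_iff by metis
  obtain y where y: "y \<in> topspace X" "B = orbit act y" using AB(2) orbits_iff by metis
  obtain z where z: "z \<in> A" "z \<in> B" using AB(3) by blast
  have "orbit act z = A" using orbit_eq[OF assms x(1)] x(2) z(1) by simp
  moreover have "orbit act z = B" using orbit_eq[OF assms y(1)] y(2) z(2) by simp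
  ultimately show "A = B" by simp
qed

lemma orbit_unique:
  assumes "U1_action X act" "C \<in> orbits X act" "x \<in> C"
  shows "C = orbit act x"
proof -
  obtain y where y: "y \<in> topspace X" "C = orbit act y" using assms(2) orbits_iff by metis
  show ?thesis using orbit_eq[OF assms(1) y(1)] assms(3) y(2) by simp
qed

lemma topspace_orbit_space:
  assumes "U1_action X act"
  shows "topspace (orbit_space X act) = orbits X act"
  unfolding orbit_space_def using topspace_quot_top[OF partition_orbits[OF assms]] .

lemma openin_orbit_space:
  assumes "U1_action X act"
  shows "openin (orbit_space X act) U \<longleftrightarrow> U \<subseteq> orbits X act \<and> openin X (\<Union>U)"
  unfolding orbit_space_def using openin_quot_top[OF partition_orbits[OF assms]] .

lemma continuous_orbit:
  assumes "U1_action X act"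
  shows "continuous_map X (orbit_space X act) (orbit act)"
  unfolding continuous_map_def
proof (intro conjI allI impI)
  show "orbit act \<in> topspace X \<rightarrow> topspace (orbit_space X act)"
    unfolding topspace_orbit_space[OF assms] orbits_def by blast
  fix U assume U: "openin (orbit_space X act) U"
  then have U': "U \<subseteq> orbits X act" "openin X (\<Union>U)" using openin_orbit_space[OF assms] by auto
  have "{x \<in> topspace X. orbit act x \<in> U} = \<Union>U"
  proof
    show "\<Union>U \<subseteq> {x \<in> topspace X. orbit act x \<in> U}"
    proof
      fix x assume "x \<in> \<Union>U"
      then obtain C where C: "C \<in> U" "x \<in> C" by blast
      have "C \<in> orbits X act" using C(1) U'(1) by blast
      then have "C = orbit act x" using orbit_unique[OF assms _ C(2)] by simp
      moreover have "x \<in> topspace X" using openin_subset[OF U'(2)] C by blast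
      ultimately show "x \<in> {x \<in> topspace X. orbit act x \<in> U}" using C(1) by simp
    qed
    show "{x \<in> topspace X. orbit act x \<in> U} \<subseteq> \<Union>U"
    proof
      fix x assume "x \<in> {x \<in> topspace X. orbit act x \<in> U}"
      then have "x \<in> topspace X" "orbit act x \<in> U" by simp_all
      then show "x \<in> \<Union>U" using in_orbit[OF assms] by blast
    qed
  qed
  then show "openin X {x \<in> topspace X. orbit act x \<in> U}" using U' by simp
qed


lemma act_cont_comp:
  assumes "U1_action X act" "continuous_map Z (top_of_set U1) a" "continuous_map Z X b"
  shows "continuous_map Z X (\<lambda>z. act (a z) (b z))"
proof -
  have c: "continuous_map (prod_topology (top_of_set U1) X) X (\<lambda>(t, x). act t x)"
    using assms(1) unfolding U1_action_def by blast
  have "continuous_map Z X ((\<lambda>(t, x). act t x) \<circ> (\<lambda>z. (a z, b z)))"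
    by (rule continuous_map_compose[OF continuous_map_pairedI[OF assms(2,3)] c])
  then show ?thesis by (simp add: o_def)
qed

lemma act_cont_t:
  assumes "U1_action X act" "t \<in> U1"
  shows "continuous_map X X (act t)"
  using act_cont_comp[OF assms(1), of X "\<lambda>_. t" id] assms(2) by (simp add: id_def)

lemma minus_one_U1: "(-1::complex) \<in> U1" by simp

lemma fixed_iff: "x \<in> fixed_points X act \<longleftrightarrow> x \<in> topspace X \<and> (\<forall>t\<in>U1. act t x = x)"
proof
  assume a: "x \<in> fixed_points X act"
  then have s: "stabilizer act x = U1" and "x \<in> topspace X" unfolding fixed_points_def by simp_all
  moreover have "\<forall>t\<in>U1. act t x = x"
  proof
    fix t :: complex assume "t \<in> U1"
    then have "t \<in> stabilizer act x" using s by simp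
    then show "act t x = x" unfolding stabilizer_def by simp
  qed
  ultimately show "x \<in> topspace X \<and> (\<forall>t\<in>U1. act t x = x)" by simp
next
  assume a: "x \<in> topspace X \<and> (\<forall>t\<in>U1. act t x = x)"
  have "stabilizer act x = U1"
  proof (rule set_eqI)
    fix t show "t \<in> stabilizer act x \<longleftrightarrow> t \<in> U1" unfolding stabilizer_def mem_Collect_eq using a by blast
  qed
  then show "x \<in> fixed_points X act" unfolding fixed_points_def using a by simp
qed

lemma fixed_act:
  assumes "x \<in> fixed_points X act" "t \<in> U1"
  shows "act t x = x"
  using assms fixed_iff[of x X act] by simp

lemma fixed_in: "x \<in> fixed_points X act \<Longrightarrow> x \<in> topspace X"
  using fixed_iff[of x X act] by simp

lemma free_in: "x \<in> free_points X act \<Longrightarrow> x \<in> topspace X"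
  unfolding free_points_def by simp

lemma fixed_orbit:
  assumes "U1_action X act" "x \<in> fixed_points X act"
  shows "orbit act x = {x}"
proof -
  have "\<forall>t\<in>U1. act t x = x" using fixed_act[OF assms(2)] by blast
  then have "orbit act x = (\<lambda>t. x) ` U1" unfolding orbit_def by (intro image_cong) auto
  also have "\<dots> = {x}" using minus_one_U1 by blast
  finally show ?thesis .
qed

lemma single_orbit_fixed:
  assumes "x \<in> topspace X" "orbit act x = {x}"
  shows "x \<in> fixed_points X act"
proof -
  have "\<forall>t\<in>U1. act t x = x"
  proof
    fix t :: complex assume "t \<in> U1"
    then have "act t x \<in> orbit act x" unfolding orbit_def by (rule imageI)
    then show "act t x = x" using assms(2) by simp
  qed
  then show ?thesis using fixed_iff[of x X act] assms(1) by simp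
qed

lemma free_not_fixed:
  assumes "x \<in> free_points X act"
  shows "x \<notin> fixed_points X act"
proof
  assume fx: "x \<in> fixed_points X act"
  have "act (-1) x = x" by (rule fixed_act[OF fx minus_one_U1])
  then have "(-1::complex) \<in> stabilizer act x" unfolding stabilizer_def mem_Collect_eq using minus_one_U1 by blast
  moreover have "stabilizer act x = {1}" using assms unfolding free_points_def by simp
  ultimately have "(-1::complex) = 1" by simp
  then show False by simp
qed

lemma fixed_or_free:
  assumes "\<forall>x\<in>topspace X. stabilizer act x = {1} \<or> stabilizer act x = U1" "x \<in> topspace X"
  shows "x \<in> fixed_points X act \<or> x \<in> free_points X act"
  using assms unfolding fixed_points_def free_points_def mem_Collect_eq by blast

lemma stab_act:
  assumes "U1_action X act" "t \<in> U1" "x \<in> topspace X"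
  shows "stabilizer act (act t x) = stabilizer act x"
proof -
  have *: "act u (act t x) = act t x \<longleftrightarrow> act u x = x" if u: "u \<in> U1" for u
  proof
    assume "act u (act t x) = act t x"
    then have "act (cnj t) (act u (act t x)) = act (cnj t) (act t x)" by simp
    moreover have "act u (act t x) = act t (act u x)"
      using act_mult[OF assms(1) u assms(2,3)] act_mult[OF assms(1) assms(2) u assms(3)]
      by (simp add: mult.commute)
    ultimately show "act u x = x"
      using act_cnj[OF assms(1,2)] act_in[OF assms(1) u assms(3)] assms(3) by simp
  next
    assume a: "act u x = x"
    have "act u (act t x) = act (u * t) x" by (rule act_mult[OF assms(1) u assms(2,3)])
    also have "\<dots> = act (t * u) x" by (simp add: mult.commute)
    also have "\<dots> = act t (act u x)" by (rule act_mult[OF assms(1) assms(2) u assms(3), symmetric])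
    finally show "act u (act t x) = act t x" using a by simp
  qed
  show ?thesis
  proof (rule set_eqI)
    fix u show "u \<in> stabilizer act (act t x) \<longleftrightarrow> u \<in> stabilizer act x"
      unfolding stabilizer_def mem_Collect_eq using * by blast
  qed
qed

lemma free_act:
  assumes "U1_action X act" "x \<in> free_points X act" "t \<in> U1"
  shows "act t x \<in> free_points X act"
proof -
  have x: "x \<in> topspace X" using free_in[OF assms(2)] .
  have "stabilizer act (act t x) = {1}"
    using stab_act[OF assms(1,3) x] assms(2) unfolding free_points_def by simp
  moreover have "act t x \<in> topspace X" by (rule act_in[OF assms(1,3) x])
  ultimately show ?thesis unfolding free_points_def by simp
qed

lemma orbit_closed:
  assumes "U1_action X act" "x \<in> topspace X" "y \<in> orbit act x" "t \<in> U1"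
  shows "act t y \<in> orbit act x"
proof -
  have y: "y \<in> topspace X" using orbit_sub[OF assms(1,2)] assms(3) by blast
  have "act t y \<in> orbit act (act t y)" using in_orbit[OF assms(1) act_in[OF assms(1) assms(4) y]] .
  also have "orbit act (act t y) = orbit act x"
    using orbit_act[OF assms(1) assms(4) y] orbit_eq[OF assms(1-3)] by simp
  finally show ?thesis .
qed

lemma free_orbit_sub:
  assumes "U1_action X act" "x \<in> free_points X act"
  shows "orbit act x \<subseteq> free_points X act"
proof
  fix y assume "y \<in> orbit act x"
  then obtain t where "t \<in> U1" "y = act t x" unfolding orbit_def by blast
  then show "y \<in> free_points X act" using free_act[OF assms(1,2)] by simp
qed

lemma free_inj:
  assumes "U1_action X act" "x \<in> free_points X act" "t \<in> U1" "u \<in> U1" "act t x = act u x"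
  shows "t = u"
proof -
  have x: "x \<in> topspace X" using free_in[OF assms(2)] .
  have "act (cnj u * t) x = act (cnj u) (act t x)"
    using act_mult[OF assms(1) U1_cnj[OF assms(4)] assms(3) x] by simp
  also have "\<dots> = x" using assms(5) act_cnj[OF assms(1,4) x] by simp
  finally have "cnj u * t \<in> stabilizer act x"
    unfolding stabilizer_def mem_Collect_eq using U1_mult[OF U1_cnj[OF assms(4)] assms(3)] by blast
  moreover have "stabilizer act x = {1}" using assms(2) unfolding free_points_def by simp
  ultimately have "cnj u * t = 1" by simp
  have "t = (cnj u * u) * t" using U1_inv[OF assms(4)] by simp
  also have "\<dots> = u * (cnj u * t)" by (simp only: mult.commute mult.left_commute)
  also have "\<dots> = u" using \<open>cnj u * t = 1\<close> by simp
  finally show ?thesis .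
qed

lemma closed_fixed:
  assumes "U1_action X act" "Hausdorff_space X"
  shows "closedin X (fixed_points X act)"
proof -
  have "fixed_points X act = \<Inter>((\<lambda>t. {x \<in> topspace X. act t x = id x}) ` U1)"
  proof
    show "fixed_points X act \<subseteq> \<Inter>((\<lambda>t. {x \<in> topspace X. act t x = id x}) ` U1)"
    proof
      fix x assume "x \<in> fixed_points X act"
      then have "x \<in> topspace X" "\<forall>t\<in>U1. act t x = x" using fixed_iff[of x X act] by simp_all
      then show "x \<in> \<Inter>((\<lambda>t. {x \<in> topspace X. act t x = id x}) ` U1)" by simp
    qed
    show "\<Inter>((\<lambda>t. {x \<in> topspace X. act t x = id x}) ` U1) \<subseteq> fixed_points X act"
    proof
      fix x assume a: "x \<in> \<Inter>((\<lambda>t. {x \<in> topspace X. act t x = id x}) ` U1)"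
      then have "x \<in> topspace X" using minus_one_U1 by blast
      moreover have "\<forall>t\<in>U1. act t x = x" using a by auto
      ultimately show "x \<in> fixed_points X act" using fixed_iff[of x X act] by simp
    qed
  qed
  also have "closedin X \<dots>"
  proof (rule closedin_Inter)
    show "(\<lambda>t. {x \<in> topspace X. act t x = id x}) ` U1 \<noteq> {}" using minus_one_U1 by blast
    fix S assume "S \<in> (\<lambda>t. {x \<in> topspace X. act t x = id x}) ` U1"
    then obtain t where t: "t \<in> U1" "S = {x \<in> topspace X. act t x = id x}" by blast
    show "closedin X S" unfolding t(2)
      by (rule closedin_continuous_maps_eq[OF assms(2) act_cont_t[OF assms(1) t(1)] continuous_map_id])
  qed
  finally show ?thesis .
qed

lemma open_free:
  assumes "U1_action X act" "Hausdorff_space X"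
    "\<forall>x\<in>topspace X. stabilizer act x = {1} \<or> stabilizer act x = U1"
  shows "openin X (free_points X act)"
proof -
  have "free_points X act = topspace X - fixed_points X act"
  proof
    show "free_points X act \<subseteq> topspace X - fixed_points X act"
      using free_not_fixed free_in by fast
    show "topspace X - fixed_points X act \<subseteq> free_points X act"
      using fixed_or_free[OF assms(3)] by fast
  qed
  then show ?thesis using closed_fixed[OF assms(1,2)] by (simp add: openin_diff)
qed

lemma fixed_orbits_singleton:
  assumes "U1_action X act" "C \<in> orbit act ` fixed_points X act"
  shows "\<exists>x. x \<in> fixed_points X act \<and> C = {x}"
proof -
  obtain x where "x \<in> fixed_points X act" "C = orbit act x" using assms(2) by blast
  then show ?thesis using fixed_orbit[OF assms(1)] by auto
qed

lemma compact_space_U1: "compact_space (top_of_set U1)"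
  by (simp add: compact_space_subtopology)


lemma tau_ex:
  assumes A: "U1_action X act" and x: "x \<in> free_points X act" and hx: "y \<in> orbit act x"
  shows "\<exists>t. t \<in> U1 \<and> act t y = x"
proof -
  obtain u where u: "u \<in> U1" "y = act u x" using hx unfolding orbit_def by blast
  have "act (cnj u) y = x" unfolding u(2) by (rule act_cnj[OF A u(1) free_in[OF x]])
  then show ?thesis using U1_cnj[OF u(1)] by blast
qed

lemma tau_uniq:
  assumes A: "U1_action X act" and x: "x \<in> free_points X act" and hx: "y \<in> orbit act x"
    and t: "t \<in> U1" "act t y = x" and t': "t' \<in> U1" "act t' y = x"
  shows "t = t'"
proof -
  have "y \<in> free_points X act" using free_orbit_sub[OF A x] hx by blast
  then show ?thesis using free_inj[OF A _ t(1) t'(1)] t(2) t'(2) by simp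
qed

lemma tau_some:
  assumes A: "U1_action X act" and x: "x \<in> free_points X act" and hx: "y \<in> orbit act x"
  shows "(SOME t. t \<in> U1 \<and> act t y = x) \<in> U1 \<and> act (SOME t. t \<in> U1 \<and> act t y = x) y = x"
  using someI_ex[OF tau_ex[OF assms]] .

lemma tau_cont:
  assumes A: "U1_action X act" and H: "Hausdorff_space X"
    and W: "W \<subseteq> free_points X act"
    and h: "continuous_map (subtopology X W) X h"
    and ht: "\<forall>x\<in>W. h x \<in> orbit act x"
  shows "continuous_map (subtopology X W) (top_of_set U1) (\<lambda>x. SOME t. t \<in> U1 \<and> act t (h x) = x)"
proof -
  define Y where "Y = subtopology X W"
  define \<tau> where "\<tau> x = (SOME t. t \<in> U1 \<and> act t (h x) = x)" for x
  have WX: "W \<subseteq> topspace X" using W free_in[of _ X act] by blast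
  have TY: "topspace Y = W" unfolding Y_def topspace_subtopology using WX by blast
  have tau1: "\<tau> x \<in> U1 \<and> act (\<tau> x) (h x) = x" if "x \<in> W" for x
  proof -
    have "x \<in> free_points X act" using W that by blast
    then show ?thesis unfolding \<tau>_def by (rule tau_some[OF A _ ht[rule_format, OF that]])
  qed
  have tau2: "t = \<tau> x" if "x \<in> W" "t \<in> U1" "act t (h x) = x" for x t
  proof -
    have "x \<in> free_points X act" using W that(1) by blast
    from tau_uniq[OF A this ht[rule_format, OF that(1)] that(2,3)] tau1[OF that(1)] show ?thesis by blast
  qed
  define P where "P = prod_topology Y (top_of_set U1)"
  have TP: "topspace P = W \<times> U1" unfolding P_def using TY by simp
  define G where "G = {z \<in> topspace P. act (snd z) (h (fst z)) = fst z}"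
  have hY: "continuous_map Y X h" using h unfolding Y_def .
  have c1: "continuous_map P X (\<lambda>z. act (snd z) (h (fst z)))"
  proof (rule act_cont_comp[OF A])
    show "continuous_map P (top_of_set U1) snd" unfolding P_def by (rule continuous_map_snd)
    have "continuous_map P X (h \<circ> fst)"
      unfolding P_def by (rule continuous_map_compose[OF continuous_map_fst hY])
    then show "continuous_map P X (\<lambda>z. h (fst z))" by (simp add: o_def)
  qed
  have c2: "continuous_map P X fst"
  proof -
    have "continuous_map P Y fst" unfolding P_def by (rule continuous_map_fst)
    then show ?thesis unfolding Y_def by (rule continuous_map_into_fulltopology)
  qed
  have clG: "closedin P G" unfolding G_def by (rule closedin_continuous_maps_eq[OF H c1 c2])
  have GP: "G \<subseteq> topspace P" unfolding G_def by blast
  have TG: "topspace (subtopology P G) = G" unfolding topspace_subtopology using GP by blast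
  have cm: "closed_map (subtopology P G) Y fst"
    by (rule closed_map_from_subtopology[OF _ clG]) (simp add: P_def closed_map_fst compact_space_U1)
  have cc: "continuous_map (subtopology P G) Y fst"
    unfolding P_def by (rule continuous_map_from_subtopology[OF continuous_map_fst])
  have img: "fst ` topspace (subtopology P G) = topspace Y"
  proof
    show "fst ` topspace (subtopology P G) \<subseteq> topspace Y" unfolding TG TY using GP TP by auto
    show "topspace Y \<subseteq> fst ` topspace (subtopology P G)"
    proof
      fix x assume "x \<in> topspace Y"
      then have x: "x \<in> W" using TY by simp
      have "(x, \<tau> x) \<in> G" unfolding G_def TP using tau1[OF x] x by simp
      then show "x \<in> fst ` topspace (subtopology P G)" unfolding TG by (metis fst_conv imageI)
    qed
  qed
  have inj: "inj_on fst (topspace (subtopology P G))"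
  proof (rule inj_onI)
    fix a b assume a: "a \<in> topspace (subtopology P G)" and b: "b \<in> topspace (subtopology P G)"
      and e: "fst a = fst b"
    have a': "fst a \<in> W" "snd a \<in> U1" "act (snd a) (h (fst a)) = fst a"
      using a unfolding TG G_def TP by auto
    have b': "fst b \<in> W" "snd b \<in> U1" "act (snd b) (h (fst b)) = fst b"
      using b unfolding TG G_def TP by auto
    have "snd a = \<tau> (fst a)" using tau2[OF a'] .
    moreover have "snd b = \<tau> (fst a)" using tau2[OF b'] e by simp
    ultimately have "snd a = snd b" by simp
    then show "a = b" using e by (simp add: prod_eq_iff)
  qed
  have "homeomorphic_map (subtopology P G) Y fst"
    by (rule bijective_closed_imp_homeomorphic_map[OF cc cm img inj])
  then obtain g where g: "homeomorphic_maps (subtopology P G) Y fst g"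
    using homeomorphic_map_maps by blast
  have gc: "continuous_map Y (subtopology P G) g" and gi: "\<And>y. y \<in> topspace Y \<Longrightarrow> fst (g y) = y"
    using g unfolding homeomorphic_maps_def by auto
  have gG: "g y \<in> G" if "y \<in> topspace Y" for y
    using continuous_map_image_subset_topspace[OF gc] that TG by blast
  have sc: "continuous_map Y (top_of_set U1) (snd \<circ> g)"
  proof (rule continuous_map_compose[OF _ continuous_map_snd])
    show "continuous_map Y (prod_topology Y (top_of_set U1)) g"
      using continuous_map_into_fulltopology[OF gc] unfolding P_def .
  qed
  have "continuous_map Y (top_of_set U1) \<tau>"
  proof (rule continuous_map_eq[OF sc])
    fix y assume y: "y \<in> topspace Y"
    have "g y \<in> G" by (rule gG[OF y])
    then have "snd (g y) \<in> U1" "act (snd (g y)) (h (fst (g y))) = fst (g y)"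
      unfolding G_def TP by auto
    then have "snd (g y) \<in> U1" "act (snd (g y)) (h y) = y" using gi[OF y] by simp_all
    then show "(snd \<circ> g) y = \<tau> y" using tau2 y TY by simp
  qed
  then show ?thesis unfolding Y_def \<tau>_def .
qed


lemma open_core:
  assumes A: "U1_action X act" and V: "openin X V"
  shows "openin X {y \<in> topspace X. \<forall>t\<in>U1. act t y \<in> V}"
proof -
  define P where "P = prod_topology (top_of_set U1) X"
  have c: "continuous_map P X (\<lambda>(t, x). act t x)" using A unfolding U1_action_def P_def by blast
  define K where "K = {z \<in> topspace P. (\<lambda>(t, x). act t x) z \<in> topspace X - V}"
  have "closedin P K" unfolding K_def
    by (rule closedin_continuous_map_preimage[OF c]) (use V in blast)
  then have cK: "closedin X (snd ` K)"
    using closed_map_snd[OF compact_space_U1, of X] unfolding closed_map_def P_def by blast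
  have TP: "topspace P = U1 \<times> topspace X" unfolding P_def by simp
  have eq: "{y \<in> topspace X. \<forall>t\<in>U1. act t y \<in> V} = topspace X - snd ` K"
  proof
    show "{y \<in> topspace X. \<forall>t\<in>U1. act t y \<in> V} \<subseteq> topspace X - snd ` K"
    proof
      fix y assume y: "y \<in> {y \<in> topspace X. \<forall>t\<in>U1. act t y \<in> V}"
      have "y \<notin> snd ` K"
      proof
        assume "y \<in> snd ` K"
        then obtain z where z: "z \<in> K" "y = snd z" by blast
        then have "fst z \<in> U1" "act (fst z) (snd z) \<notin> V" unfolding K_def TP by (auto simp: case_prod_beta)
        then show False using y z(2) by simp
      qed
      then show "y \<in> topspace X - snd ` K" using y by simp
    qed
    show "topspace X - snd ` K \<subseteq> {y \<in> topspace X. \<forall>t\<in>U1. act t y \<in> V}"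
    proof
      fix y assume y: "y \<in> topspace X - snd ` K"
      have "act t y \<in> V" if t: "t \<in> U1" for t
      proof (rule ccontr)
        assume "act t y \<notin> V"
        then have "(t, y) \<in> K" unfolding K_def TP using t y act_in[OF A t] by simp
        then have "y \<in> snd ` K" by (metis snd_conv imageI)
        then show False using y by simp
      qed
      then show "y \<in> {y \<in> topspace X. \<forall>t\<in>U1. act t y \<in> V}" using y by simp
    qed
  qed
  show ?thesis unfolding eq by (rule openin_diff[OF openin_topspace cK])
qed

lemma construct:
  assumes A: "U1_action X act" and A': "U1_action X' act'"
    and H: "Hausdorff_space X" and H': "Hausdorff_space X'"
    and SD: "\<forall>x\<in>topspace X. stabilizer act x = {1} \<or> stabilizer act x = U1"
    and SD': "\<forall>x\<in>topspace X'. stabilizer act' x = {1} \<or> stabilizer act' x = U1"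
    and sc: "continuous_map (subtopology (orbit_space X act) (orbit act ` free_points X act))
                 (subtopology X (free_points X act)) s"
    and ss: "\<forall>C\<in>orbit act ` free_points X act. s C \<in> C"
    and sc': "continuous_map (subtopology (orbit_space X' act') (orbit act' ` free_points X' act'))
                 (subtopology X' (free_points X' act')) s'"
    and ss': "\<forall>C\<in>orbit act' ` free_points X' act'. s' C \<in> C"
    and fc: "continuous_map (orbit_space X act) (orbit_space X' act') f"
    and ffix: "\<forall>x\<in>fixed_points X act. f (orbit act x) \<in> orbit act' ` fixed_points X' act'"
    and ffree: "\<forall>x\<in>free_points X act. f (orbit act x) \<in> orbit act' ` free_points X' act'"
  shows "\<exists>F. continuous_map X X' F \<and> (\<forall>x\<in>topspace X. F x \<in> f (orbit act x)) \<and>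
           (\<forall>C\<in>orbit act ` free_points X act. \<forall>t\<in>U1. F (act t (s C)) = act' t (s' (f C)))"
proof -
  define Fr where "Fr = free_points X act"
  define \<tau> where "\<tau> x = (SOME t. t \<in> U1 \<and> act t (s (orbit act x)) = x)" for x
  define F where "F x = (if x \<in> Fr then act' (\<tau> x) (s' (f (orbit act x)))
                         else (SOME y. y \<in> f (orbit act x)))" for x
  have sx: "s (orbit act x) \<in> orbit act x" if "x \<in> Fr" for x
    using ss that unfolding Fr_def by blast
  have tau1: "\<tau> x \<in> U1 \<and> act (\<tau> x) (s (orbit act x)) = x" if x: "x \<in> Fr" for x
    unfolding \<tau>_def by (rule tau_some[OF A x[unfolded Fr_def] sx[OF x]])
  have tau2: "t = \<tau> x" if x: "x \<in> Fr" and t: "t \<in> U1" "act t (s (orbit act x)) = x" for x t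
    using tau_uniq[OF A x[unfolded Fr_def] sx[OF x] t] tau1[OF x] by blast
  have fr_img: "\<exists>z. z \<in> free_points X' act' \<and> f (orbit act x) = orbit act' z" if x: "x \<in> Fr" for x
    using ffree x unfolding Fr_def by blast
  have Ffree: "F x = act' (\<tau> x) (s' (f (orbit act x)))" if "x \<in> Fr" for x
    using that unfolding F_def by simp
  have Ffix: "\<exists>y. y \<in> fixed_points X' act' \<and> f (orbit act x) = {y} \<and> F x = y"
    if x: "x \<in> fixed_points X act" for x
  proof -
    obtain y where y: "y \<in> fixed_points X' act'" "f (orbit act x) = {y}"
      using fixed_orbits_singleton[OF A'] ffix x by meson
    have "x \<notin> Fr" using free_not_fixed[of x X act] x unfolding Fr_def by blast
    then have "F x = y" unfolding F_def y(2) by simp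
    then show ?thesis using y by blast
  qed
  have F2: "F x \<in> f (orbit act x)" if x: "x \<in> topspace X" for x
  proof (cases "x \<in> Fr")
    case True
    obtain z where z: "z \<in> free_points X' act'" "f (orbit act x) = orbit act' z"
      using fr_img[OF True] by blast
    have "s' (f (orbit act x)) \<in> f (orbit act x)" using ss' z by simp
    then show ?thesis unfolding Ffree[OF True] z(2)
      using orbit_closed[OF A' free_in[OF z(1)] _ conjunct1[OF tau1[OF True]]] by simp
  next
    case False
    then have "x \<in> fixed_points X act" using fixed_or_free[OF SD x] unfolding Fr_def by blast
    then show ?thesis using Ffix by fastforce
  qed
  have F3: "F (act t (s C)) = act' t (s' (f C))" if C: "C \<in> orbit act ` Fr" and t: "t \<in> U1" for C t
  proof -
    obtain c where c: "c \<in> Fr" "C = orbit act c" using C by blast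
    have sC: "s C \<in> C" using ss C unfolding Fr_def by blast
    have sCF: "s C \<in> Fr" using free_orbit_sub[OF A c(1)[unfolded Fr_def]] sC c(2) unfolding Fr_def by blast
    have sCt: "s C \<in> topspace X" using free_in sCF unfolding Fr_def by metis
    define x where "x = act t (s C)"
    have xF: "x \<in> Fr" unfolding x_def Fr_def using free_act[OF A sCF[unfolded Fr_def] t] .
    have ox: "orbit act x = C"
      unfolding x_def orbit_act[OF A t sCt] using orbit_eq[OF A free_in[OF c(1)[unfolded Fr_def]]] sC c(2)
      by simp
    have "act t (s (orbit act x)) = x" by (subst ox) (simp add: x_def)
    then have "t = \<tau> x" by (rule tau2[OF xF t])
    then show ?thesis using Ffree[OF xF] ox unfolding x_def by simp
  qed
  define Y where "Y = subtopology X Fr"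
  have FrX: "Fr \<subseteq> topspace X" unfolding Fr_def using free_in[of _ X act] by blast
  have TY: "topspace Y = Fr" unfolding Y_def topspace_subtopology using FrX by blast
  have oc: "continuous_map Y (subtopology (orbit_space X act) (orbit act ` Fr)) (orbit act)"
    unfolding continuous_map_in_subtopology
  proof
    show "continuous_map Y (orbit_space X act) (orbit act)"
      unfolding Y_def by (rule continuous_map_from_subtopology[OF continuous_orbit[OF A]])
    show "orbit act \<in> topspace Y \<rightarrow> orbit act ` Fr" unfolding TY by blast
  qed
  have hc: "continuous_map Y X (\<lambda>x. s (orbit act x))"
  proof -
    have "continuous_map Y (subtopology X Fr) (s \<circ> orbit act)"
      by (rule continuous_map_compose[OF oc sc[folded Fr_def]])
    then show ?thesis by (simp add: o_def continuous_map_into_fulltopology)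
  qed
  have tc: "continuous_map Y (top_of_set U1) \<tau>"
  proof -
    have "continuous_map (subtopology X Fr) (top_of_set U1)
            (\<lambda>x. SOME t. t \<in> U1 \<and> act t (s (orbit act x)) = x)"
      by (rule tau_cont[OF A H _ hc[unfolded Y_def]]) (use sx Fr_def in auto)
    then show ?thesis unfolding Y_def \<tau>_def .
  qed
  have fc': "continuous_map (subtopology (orbit_space X act) (orbit act ` Fr))
                (subtopology (orbit_space X' act') (orbit act' ` free_points X' act')) f"
    unfolding continuous_map_in_subtopology
  proof
    show "continuous_map (subtopology (orbit_space X act) (orbit act ` Fr)) (orbit_space X' act') f"
      by (rule continuous_map_from_subtopology[OF fc])
    show "f \<in> topspace (subtopology (orbit_space X act) (orbit act ` Fr)) \<rightarrow> orbit act' ` free_points X' act'"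
      unfolding topspace_subtopology using ffree unfolding Fr_def by blast
  qed
  have gc: "continuous_map Y X' (\<lambda>x. s' (f (orbit act x)))"
  proof -
    have "continuous_map Y (subtopology X' (free_points X' act')) (s' \<circ> (f \<circ> orbit act))"
      by (rule continuous_map_compose[OF continuous_map_compose[OF oc fc'] sc'])
    then show ?thesis by (simp add: o_def continuous_map_into_fulltopology)
  qed
  have FYc: "continuous_map Y X' F"
  proof (rule continuous_map_eq[OF act_cont_comp[OF A' tc gc]])
    fix x assume "x \<in> topspace Y"
    then show "act' (\<tau> x) (s' (f (orbit act x))) = F x" using Ffree TY by simp
  qed
  have openFr: "openin X Fr" unfolding Fr_def by (rule open_free[OF A H SD])
  have Fmap: "F x \<in> topspace X'" if x: "x \<in> topspace X" for x
  proof -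
    have "orbit act x \<in> topspace (orbit_space X act)"
      unfolding topspace_orbit_space[OF A] orbits_iff using x by blast
    then have "f (orbit act x) \<in> orbits X' act'"
      using continuous_map_image_subset_topspace[OF fc] topspace_orbit_space[OF A'] by blast
    then obtain z where z: "z \<in> topspace X'" "f (orbit act x) = orbit act' z" using orbits_iff by metis
    show ?thesis using F2[OF x] orbit_sub[OF A' z(1)] z(2) by blast
  qed
  have "topcontinuous_at X X' F x" if x: "x \<in> topspace X" for x
    unfolding topcontinuous_at_def
  proof (intro conjI allI impI)
    show "x \<in> topspace X" by (rule x)
    show "F \<in> topspace X \<rightarrow> topspace X'" using Fmap by blast
    fix V assume V: "openin X' V \<and> F x \<in> V"
    show "\<exists>U. openin X U \<and> x \<in> U \<and> (\<forall>y\<in>U. F y \<in> V)"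
    proof (cases "x \<in> Fr")
      case True
      define S where "S = {y \<in> topspace Y. F y \<in> V}"
      have "openin Y S" unfolding S_def using openin_continuous_map_preimage[OF FYc] V by blast
      then have "openin X S" using openin_trans_full[OF _ openFr] unfolding Y_def by blast
      moreover have "x \<in> S" unfolding S_def TY using True V by simp
      moreover have "\<forall>y\<in>S. F y \<in> V" unfolding S_def by blast
      ultimately show ?thesis by blast
    next
      case False
      then have xfix: "x \<in> fixed_points X act" using fixed_or_free[OF SD x] unfolding Fr_def by blast
      obtain y' where y': "y' \<in> fixed_points X' act'" "f (orbit act x) = {y'}" "F x = y'"
        using Ffix[OF xfix] by blast
      define V0 where "V0 = {y \<in> topspace X'. \<forall>t\<in>U1. act' t y \<in> V}"
      have oV0: "openin X' V0" unfolding V0_def using open_core[OF A'] V by blast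
      have V0V: "V0 \<subseteq> V"
      proof
        fix y assume "y \<in> V0"
        then have "y \<in> topspace X'" "act' 1 y \<in> V" unfolding V0_def by auto
        then show "y \<in> V" using act_one[OF A'] by simp
      qed
      define Op where "Op = {C \<in> orbits X' act'. C \<subseteq> V0}"
      have UO': "\<Union>Op = V0"
      proof
        show "\<Union>Op \<subseteq> V0" unfolding Op_def by blast
        show "V0 \<subseteq> \<Union>Op"
        proof
          fix y assume y: "y \<in> V0"
          then have yt: "y \<in> topspace X'" unfolding V0_def by simp
          have "orbit act' y \<subseteq> V0"
          proof
            fix w assume "w \<in> orbit act' y"
            then obtain u where u: "u \<in> U1" "w = act' u y" unfolding orbit_def by blast
            have "w \<in> topspace X'" using act_in[OF A' u(1) yt] u(2) by simp
            moreover have "act' t w \<in> V" if t: "t \<in> U1" for t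
            proof -
              have "act' t w = act' (t * u) y" using act_mult[OF A' t u(1) yt] u(2) by simp
              then show ?thesis using y U1_mult[OF t u(1)] unfolding V0_def by simp
            qed
            ultimately show "w \<in> V0" unfolding V0_def by blast
          qed
          moreover have "orbit act' y \<in> orbits X' act'" using orbits_iff yt by metis
          ultimately have "orbit act' y \<in> Op" unfolding Op_def by blast
          then show "y \<in> \<Union>Op" using in_orbit[OF A' yt] by blast
        qed
      qed
      have oO': "openin (orbit_space X' act') Op"
        unfolding openin_orbit_space[OF A'] UO' using oV0 unfolding Op_def by blast
      define Oq where "Oq = {C \<in> topspace (orbit_space X act). f C \<in> Op}"
      have oO: "openin (orbit_space X act) Oq"
        unfolding Oq_def by (rule openin_continuous_map_preimage[OF fc oO'])
      then have oU: "openin X (\<Union>Oq)" and Osub: "Oq \<subseteq> orbits X act"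
        using openin_orbit_space[OF A] by blast+
      have y't: "y' \<in> topspace X'" by (rule fixed_in[OF y'(1)])
      have "{y'} \<in> Op"
      proof -
        have "{y'} \<in> orbits X' act'" using fixed_orbit[OF A' y'(1)] orbits_iff y't by metis
        moreover have "y' \<in> V0" unfolding V0_def using y't fixed_act[OF y'(1)] V y'(3) by simp
        ultimately show ?thesis unfolding Op_def by blast
      qed
      moreover have "orbit act x \<in> topspace (orbit_space X act)"
        unfolding topspace_orbit_space[OF A] orbits_iff using x by blast
      ultimately have "orbit act x \<in> Oq" unfolding Oq_def using y'(2) by simp
      then have xU: "x \<in> \<Union>Oq" using in_orbit[OF A x] by blast
      have "F z \<in> V" if z: "z \<in> \<Union>Oq" for z
      proof -
        obtain C where C: "C \<in> Oq" "z \<in> C" using z by blast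
        have Co: "C \<in> orbits X act" using C(1) Osub by blast
        have Ceq: "C = orbit act z" by (rule orbit_unique[OF A Co C(2)])
        have zt: "z \<in> topspace X" using openin_subset[OF oU] z by blast
        have "f C \<in> Op" using C(1) unfolding Oq_def by simp
        then have "f C \<subseteq> V0" unfolding Op_def by simp
        then show ?thesis using F2[OF zt] Ceq V0V by blast
      qed
      then show ?thesis using oU xU by blast
    qed
  qed
  then have "continuous_map X X' F" using continuous_map_eq_topcontinuous_at by blast
  moreover have "\<forall>x\<in>topspace X. F x \<in> f (orbit act x)" using F2 by blast
  moreover have "\<forall>C\<in>orbit act ` free_points X act. \<forall>t\<in>U1. F (act t (s C)) = act' t (s' (f C))"
    using F3 unfolding Fr_def by blast
  ultimately show ?thesis by blast
qed


lemma F_equiv: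
  assumes A: "U1_action X act" and A': "U1_action X' act'"
    and SD: "\<forall>x\<in>topspace X. stabilizer act x = {1} \<or> stabilizer act x = U1"
    and ss: "\<forall>C\<in>orbit act ` free_points X act. s C \<in> C"
    and ss': "\<forall>C\<in>orbit act' ` free_points X' act'. s' C \<in> C"
    and ffix: "\<forall>x\<in>fixed_points X act. f (orbit act x) \<in> orbit act' ` fixed_points X' act'"
    and ffree: "\<forall>x\<in>free_points X act. f (orbit act x) \<in> orbit act' ` free_points X' act'"
    and F2: "\<forall>x\<in>topspace X. F x \<in> f (orbit act x)"
    and F3: "\<forall>C\<in>orbit act ` free_points X act. \<forall>t\<in>U1. F (act t (s C)) = act' t (s' (f C))"
    and x: "x \<in> topspace X" and t: "t \<in> U1"
  shows "F (act t x) = act' t (F x)"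
proof (cases "x \<in> fixed_points X act")
  case True
  obtain y where y: "y \<in> fixed_points X' act'" "f (orbit act x) = {y}"
    using fixed_orbits_singleton[OF A'] ffix True by meson
  have "F x = y" using F2 x y(2) by blast
  then show ?thesis using fixed_act[OF True t] fixed_act[OF y(1) t] by simp
next
  case False
  then have xf: "x \<in> free_points X act" using fixed_or_free[OF SD x] by blast
  define C where "C = orbit act x"
  have CR: "C \<in> orbit act ` free_points X act" unfolding C_def using xf by blast
  have "s C \<in> orbit act x" using ss CR unfolding C_def by blast
  then obtain u where u: "u \<in> U1" "s C = act u x" unfolding orbit_def by blast
  have xs: "x = act (cnj u) (s C)" using act_cnj[OF A u(1) x] u(2) by simp
  obtain z where z: "z \<in> free_points X' act'" "f C = orbit act' z" using ffree xf unfolding C_def by blast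
  have s'C: "s' (f C) \<in> topspace X'"
    using ss' z orbit_sub[OF A' free_in[OF z(1)]] by blast
  have "F (act t x) = F (act (t * cnj u) (s C))"
    using xs act_mult[OF A t U1_cnj[OF u(1)] act_in[OF A u(1) x]] u(2) by metis
  also have "\<dots> = act' (t * cnj u) (s' (f C))" using F3 CR U1_mult[OF t U1_cnj[OF u(1)]] by blast
  also have "\<dots> = act' t (act' (cnj u) (s' (f C)))"
    using act_mult[OF A' t U1_cnj[OF u(1)] s'C] by simp
  also have "act' (cnj u) (s' (f C)) = F x" using F3 CR U1_cnj[OF u(1)] xs by metis
  finally show ?thesis .
qed

lemma left_inv:
  assumes A: "U1_action X act" and A': "U1_action X' act'"
    and SD: "\<forall>x\<in>topspace X. stabilizer act x = {1} \<or> stabilizer act x = U1"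
    and ss: "\<forall>C\<in>orbit act ` free_points X act. s C \<in> C"
    and ffix: "\<forall>x\<in>fixed_points X act. f (orbit act x) \<in> orbit act' ` fixed_points X' act'"
    and ffree: "\<forall>x\<in>free_points X act. f (orbit act x) \<in> orbit act' ` free_points X' act'"
    and F2: "\<forall>x\<in>topspace X. F x \<in> f (orbit act x)"
    and F3: "\<forall>C\<in>orbit act ` free_points X act. \<forall>t\<in>U1. F (act t (s C)) = act' t (s' (f C))"
    and G2: "\<forall>y\<in>topspace X'. G y \<in> g (orbit act' y)"
    and G3: "\<forall>C\<in>orbit act' ` free_points X' act'. \<forall>t\<in>U1. G (act' t (s' C)) = act t (s (g C))"
    and gf: "\<forall>x\<in>topspace X. g (f (orbit act x)) = orbit act x"
    and x: "x \<in> topspace X"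
  shows "G (F x) = x"
proof (cases "x \<in> fixed_points X act")
  case True
  obtain y where y: "y \<in> fixed_points X' act'" "f (orbit act x) = {y}"
    using fixed_orbits_singleton[OF A'] ffix True by meson
  have Fx: "F x = y" using F2 x y(2) by blast
  have "G y \<in> g (orbit act' y)" using G2 fixed_in[OF y(1)] by blast
  also have "orbit act' y = f (orbit act x)" using fixed_orbit[OF A' y(1)] y(2) by simp
  also have "g \<dots> = {x}"
  proof -
    have "g (f (orbit act x)) = orbit act x" using gf x by blast
    then show ?thesis using fixed_orbit[OF A True] by simp
  qed
  finally show ?thesis using Fx by simp
next
  case False
  then have xf: "x \<in> free_points X act" using fixed_or_free[OF SD x] by blast
  define C where "C = orbit act x"
  have CR: "C \<in> orbit act ` free_points X act" unfolding C_def using xf by blast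
  have "s C \<in> orbit act x" using ss CR unfolding C_def by blast
  then obtain u where u: "u \<in> U1" "s C = act u x" unfolding orbit_def by blast
  have xs: "x = act (cnj u) (s C)" using act_cnj[OF A u(1) x] u(2) by simp
  have fCR: "f C \<in> orbit act' ` free_points X' act'" using ffree xf unfolding C_def by blast
  have "F x = act' (cnj u) (s' (f C))" using F3 CR U1_cnj[OF u(1)] xs by metis
  then have "G (F x) = act (cnj u) (s (g (f C)))" using G3 fCR U1_cnj[OF u(1)] by metis
  also have "g (f C) = C" using gf x unfolding C_def by blast
  finally show ?thesis using xs by simp
qed

lemma fix_free_of_image:
  assumes A: "U1_action X act" and A': "U1_action X' act'"
    and SD': "\<forall>x\<in>topspace X'. stabilizer act' x = {1} \<or> stabilizer act' x = U1"
    and inj: "inj_on f (orbits X act)"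
    and i1: "f ` (orbit act ` fixed_points X act) = orbit act' ` fixed_points X' act'"
    and i2: "f ` (orbits X act) = orbits X' act'"
  shows "\<forall>x\<in>fixed_points X act. f (orbit act x) \<in> orbit act' ` fixed_points X' act'"
    and "\<forall>x\<in>free_points X act. f (orbit act x) \<in> orbit act' ` free_points X' act'"
proof -
  show "\<forall>x\<in>fixed_points X act. f (orbit act x) \<in> orbit act' ` fixed_points X' act'"
    using i1 by blast
  show "\<forall>x\<in>free_points X act. f (orbit act x) \<in> orbit act' ` free_points X' act'"
  proof
    fix x assume xf: "x \<in> free_points X act"
    have xt: "x \<in> topspace X" by (rule free_in[OF xf])
    have "orbit act x \<in> orbits X act" using orbits_iff xt by metis
    then have "f (orbit act x) \<in> orbits X' act'" using i2 by blast
    then obtain z where z: "z \<in> topspace X'" "f (orbit act x) = orbit act' z" using orbits_iff by metis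
    have "z \<notin> fixed_points X' act'"
    proof
      assume zf: "z \<in> fixed_points X' act'"
      then have "f (orbit act x) \<in> f ` (orbit act ` fixed_points X act)" using i1 z(2) by simp
      then obtain w where w: "w \<in> fixed_points X act" "f (orbit act x) = f (orbit act w)" by blast
      have "orbit act w \<in> orbits X act" using orbits_iff fixed_in[OF w(1)] by metis
      then have "orbit act x = orbit act w"
        using inj_onD[OF inj w(2)] \<open>orbit act x \<in> orbits X act\<close> by blast
      then have "x \<in> {w}" using fixed_orbit[OF A w(1)] in_orbit[OF A xt] by simp
      then show False using w(1) free_not_fixed[OF xf] by simp
    qed
    then have "z \<in> free_points X' act'" using fixed_or_free[OF SD' z(1)] by blast
    then show "f (orbit act x) \<in> orbit act' ` free_points X' act'" using z(2) by blast
  qed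
qed


lemma strat_to_equiv:
  assumes A: "U1_action X act" and A': "U1_action X' act'"
    and H: "Hausdorff_space X" and H': "Hausdorff_space X'"
    and SD: "\<forall>x\<in>topspace X. stabilizer act x = {1} \<or> stabilizer act x = U1"
    and SD': "\<forall>x\<in>topspace X'. stabilizer act' x = {1} \<or> stabilizer act' x = U1"
    and ch: "chern_class_zero X act" and ch': "chern_class_zero X' act'"
    and st: "stratified_homeo (orbit_space X act) (orbit_filtration X act)
                              (orbit_space X' act') (orbit_filtration X' act') f"
  shows "\<exists>F. equiv_homeo X act X' act' F"
proof -
  have hf: "homeomorphic_map (orbit_space X act) (orbit_space X' act') f"
    using st unfolding stratified_homeo_def by blast
  have "f ` orbit_filtration X act 1 = orbit_filtration X' act' 1"
    using st unfolding stratified_homeo_def by blast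
  then have i1: "f ` (orbit act ` fixed_points X act) = orbit act' ` fixed_points X' act'"
    unfolding orbit_filtration_def by simp
  have "f ` orbit_filtration X act 2 = orbit_filtration X' act' 2"
    using st unfolding stratified_homeo_def by blast
  then have i2: "f ` (orbits X act) = orbits X' act'"
    unfolding orbit_filtration_def by simp
  obtain g where hg: "homeomorphic_maps (orbit_space X act) (orbit_space X' act') f g"
    using hf homeomorphic_map_maps by blast
  have fc: "continuous_map (orbit_space X act) (orbit_space X' act') f"
    and gc: "continuous_map (orbit_space X' act') (orbit_space X act) g"
    and gf: "\<forall>C\<in>orbits X act. g (f C) = C" and fg: "\<forall>C\<in>orbits X' act'. f (g C) = C"
    using hg unfolding homeomorphic_maps_def topspace_orbit_space[OF A] topspace_orbit_space[OF A'] by auto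
  have injf: "inj_on f (orbits X act)" using gf by (metis inj_onI)
  have injg: "inj_on g (orbits X' act')" using fg by (metis inj_onI)
  have FOsub: "orbit act ` fixed_points X act \<subseteq> orbits X act"
    using orbits_iff fixed_in by (metis image_subset_iff)
  have FOsub': "orbit act' ` fixed_points X' act' \<subseteq> orbits X' act'"
    using orbits_iff fixed_in by (metis image_subset_iff)
  have j1: "g ` (orbit act' ` fixed_points X' act') = orbit act ` fixed_points X act"
  proof -
    have "g ` (orbit act' ` fixed_points X' act') = g ` f ` (orbit act ` fixed_points X act)"
      using i1 by simp
    also have "\<dots> = (\<lambda>C. g (f C)) ` (orbit act ` fixed_points X act)" by (simp add: image_image)
    also have "\<dots> = (\<lambda>C. C) ` (orbit act ` fixed_points X act)"
      using gf FOsub by (intro image_cong) auto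
    finally show ?thesis by simp
  qed
  have j2: "g ` (orbits X' act') = orbits X act"
  proof -
    have "g ` (orbits X' act') = g ` f ` (orbits X act)" using i2 by simp
    also have "\<dots> = (\<lambda>C. g (f C)) ` (orbits X act)" by (simp add: image_image)
    also have "\<dots> = (\<lambda>C. C) ` (orbits X act)" using gf by (intro image_cong) auto
    finally show ?thesis by simp
  qed
  note ff = fix_free_of_image[OF A A' SD' injf i1 i2]
  note gg = fix_free_of_image[OF A' A SD injg j1 j2]
  obtain s where sc: "continuous_map (subtopology (orbit_space X act) (orbit act ` free_points X act))
                          (subtopology X (free_points X act)) s"
      and ss: "\<forall>C\<in>orbit act ` free_points X act. s C \<in> C"
    using ch unfolding chern_class_zero_def by blast
  obtain s' where sc': "continuous_map (subtopology (orbit_space X' act') (orbit act' ` free_points X' act'))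
                          (subtopology X' (free_points X' act')) s'"
      and ss': "\<forall>C\<in>orbit act' ` free_points X' act'. s' C \<in> C"
    using ch' unfolding chern_class_zero_def by blast
  obtain F where Fc: "continuous_map X X' F" and F2: "\<forall>x\<in>topspace X. F x \<in> f (orbit act x)"
    and F3: "\<forall>C\<in>orbit act ` free_points X act. \<forall>t\<in>U1. F (act t (s C)) = act' t (s' (f C))"
    using construct[OF A A' H H' SD SD' sc ss sc' ss' fc ff] by blast
  obtain G where Gc: "continuous_map X' X G" and G2: "\<forall>x\<in>topspace X'. G x \<in> g (orbit act' x)"
    and G3: "\<forall>C\<in>orbit act' ` free_points X' act'. \<forall>t\<in>U1. G (act' t (s' C)) = act t (s (g C))"
    using construct[OF A' A H' H SD' SD sc' ss' sc ss gc gg] by blast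
  have gf': "\<forall>x\<in>topspace X. g (f (orbit act x)) = orbit act x"
    using gf orbits_iff by metis
  have fg': "\<forall>x\<in>topspace X'. f (g (orbit act' x)) = orbit act' x"
    using fg orbits_iff by metis
  have GF: "G (F x) = x" if "x \<in> topspace X" for x
    by (rule left_inv[OF A A' SD ss ff F2 F3 G2 G3 gf' that])
  have FG: "F (G y) = y" if "y \<in> topspace X'" for y
    by (rule left_inv[OF A' A SD' ss' gg G2 G3 F2 F3 fg' that])
  have "homeomorphic_maps X X' F G" unfolding homeomorphic_maps_def using Fc Gc GF FG by blast
  then have "homeomorphic_map X X' F" using homeomorphic_maps_imp_map by blast
  moreover have "\<forall>t\<in>U1. \<forall>x\<in>topspace X. F (act t x) = act' t (F x)"
    using F_equiv[OF A A' SD ss ss' ff F2 F3] by blast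
  ultimately show ?thesis unfolding equiv_homeo_def by blast
qed

lemma orbit_image:
  assumes A: "U1_action X act" and A': "U1_action X' act'"
    and x: "x \<in> topspace X" and psi: "\<psi> ` U1 = U1"
    and eq: "\<forall>t\<in>U1. F (act t x) = act' (\<psi> t) (F x)"
  shows "F ` orbit act x = orbit act' (F x)"
proof -
  have "F ` orbit act x = (\<lambda>t. F (act t x)) ` U1" unfolding orbit_def by (simp add: image_image)
  also have "\<dots> = (\<lambda>t. act' (\<psi> t) (F x)) ` U1" using eq by (intro image_cong) auto
  also have "\<dots> = (\<lambda>u. act' u (F x)) ` (\<psi> ` U1)" by (simp add: image_image)
  also have "\<dots> = orbit act' (F x)" unfolding psi orbit_def ..
  finally show ?thesis .
qed

lemma quot_cont:
  assumes A: "U1_action X act" and A': "U1_action X' act'"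
    and Fc: "continuous_map X X' F"
    and orb: "\<forall>x\<in>topspace X. F ` orbit act x = orbit act' (F x)"
  shows "continuous_map (orbit_space X act) (orbit_space X' act') (\<lambda>C. F ` C)"
  unfolding continuous_map_def
proof (intro conjI allI impI)
  show "(\<lambda>C. F ` C) \<in> topspace (orbit_space X act) \<rightarrow> topspace (orbit_space X' act')"
  proof
    fix C assume "C \<in> topspace (orbit_space X act)"
    then obtain x where x: "x \<in> topspace X" "C = orbit act x"
      unfolding topspace_orbit_space[OF A] using orbits_iff by metis
    have "F x \<in> topspace X'" using continuous_map_image_subset_topspace[OF Fc] x(1) by blast
    then have "orbit act' (F x) \<in> orbits X' act'" using orbits_iff by metis
    then show "F ` C \<in> topspace (orbit_space X' act')"
      unfolding topspace_orbit_space[OF A'] x(2) using orb x(1) by simp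
  qed
  fix U assume U: "openin (orbit_space X' act') U"
  then have U': "U \<subseteq> orbits X' act'" "openin X' (\<Union>U)" using openin_orbit_space[OF A'] by auto
  define S where "S = {C \<in> topspace (orbit_space X act). F ` C \<in> U}"
  have "\<Union>S = {x \<in> topspace X. F x \<in> \<Union>U}"
  proof
    show "\<Union>S \<subseteq> {x \<in> topspace X. F x \<in> \<Union>U}"
    proof
      fix x assume "x \<in> \<Union>S"
      then obtain C where C: "C \<in> S" "x \<in> C" by blast
      have Co: "C \<in> orbits X act" using C(1) unfolding S_def topspace_orbit_space[OF A] by simp
      have "C \<subseteq> topspace X" using Co orbit_sub[OF A] orbits_iff by metis
      then have "x \<in> topspace X" using C(2) by blast
      moreover have "F x \<in> F ` C" using C(2) by blast
      moreover have "F ` C \<in> U" using C(1) unfolding S_def by simp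
      ultimately show "x \<in> {x \<in> topspace X. F x \<in> \<Union>U}" by blast
    qed
    show "{x \<in> topspace X. F x \<in> \<Union>U} \<subseteq> \<Union>S"
    proof
      fix x assume "x \<in> {x \<in> topspace X. F x \<in> \<Union>U}"
      then have x: "x \<in> topspace X" and "F x \<in> \<Union>U" by simp_all
      then obtain D where D: "D \<in> U" "F x \<in> D" by blast
      have "D = orbit act' (F x)" using orbit_unique[OF A'] D U'(1) by blast
      then have "F ` orbit act x \<in> U" using orb x D(1) by simp
      moreover have "orbit act x \<in> topspace (orbit_space X act)"
        unfolding topspace_orbit_space[OF A] using orbits_iff x by metis
      ultimately have "orbit act x \<in> S" unfolding S_def by simp
      then show "x \<in> \<Union>S" using in_orbit[OF A x] by blast
    qed
  qed
  moreover have "openin X {x \<in> topspace X. F x \<in> \<Union>U}"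
    by (rule openin_continuous_map_preimage[OF Fc U'(2)])
  moreover have "S \<subseteq> orbits X act" unfolding S_def topspace_orbit_space[OF A] by blast
  ultimately have "openin (orbit_space X act) S" using openin_orbit_space[OF A] by simp
  then show "openin (orbit_space X act) {C \<in> topspace (orbit_space X act). F ` C \<in> U}"
    unfolding S_def .
qed


lemma fixed_image:
  assumes A: "U1_action X act" and A': "U1_action X' act'"
    and Fm: "\<forall>x\<in>topspace X. F x \<in> topspace X'"
    and orb: "\<forall>x\<in>topspace X. F ` orbit act x = orbit act' (F x)"
    and x: "x \<in> fixed_points X act"
  shows "F x \<in> fixed_points X' act'"
proof -
  have xt: "x \<in> topspace X" by (rule fixed_in[OF x])
  have "orbit act' (F x) = F ` {x}" using orb xt fixed_orbit[OF A x] by metis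
  then have "orbit act' (F x) = {F x}" by simp
  then show ?thesis using single_orbit_fixed Fm xt by metis
qed

lemma weak_to_strat:
  assumes A: "U1_action X act" and A': "U1_action X' act'"
    and w: "weak_equiv_homeo X act X' act' F"
  shows "\<exists>f. stratified_homeo (orbit_space X act) (orbit_filtration X act)
                              (orbit_space X' act') (orbit_filtration X' act') f"
proof -
  have hF: "homeomorphic_map X X' F" using w unfolding weak_equiv_homeo_def by blast
  obtain \<psi> where psi: "torus_aut \<psi>" and eq: "\<forall>t\<in>U1. \<forall>x\<in>topspace X. F (act t x) = act' (\<psi> t) (F x)"
    using w unfolding weak_equiv_homeo_def by blast
  have psiU: "\<psi> ` U1 = U1" using psi unfolding torus_aut_def bij_betw_def by blast
  obtain G where hG: "homeomorphic_maps X X' F G" using hF homeomorphic_map_maps by blast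
  have Fc: "continuous_map X X' F" and Gc: "continuous_map X' X G"
    and GF: "\<forall>x\<in>topspace X. G (F x) = x" and FG: "\<forall>y\<in>topspace X'. F (G y) = y"
    using hG unfolding homeomorphic_maps_def by auto
  have Fm: "\<forall>x\<in>topspace X. F x \<in> topspace X'"
    using continuous_map_image_subset_topspace[OF Fc] by blast
  have Gm: "\<forall>y\<in>topspace X'. G y \<in> topspace X"
    using continuous_map_image_subset_topspace[OF Gc] by blast
  have orbF: "\<forall>x\<in>topspace X. F ` orbit act x = orbit act' (F x)"
  proof
    fix x assume x: "x \<in> topspace X"
    show "F ` orbit act x = orbit act' (F x)"
      by (rule orbit_image[OF A A' x psiU]) (use eq x in blast)
  qed
  have orbG: "\<forall>y\<in>topspace X'. G ` orbit act' y = orbit act (G y)"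
  proof
    fix y assume y: "y \<in> topspace X'"
    have Gy: "G y \<in> topspace X" using Gm y by blast
    have "orbit act' y = F ` orbit act (G y)" using orbF Gy FG y by metis
    then have "G ` orbit act' y = (\<lambda>z. G (F z)) ` orbit act (G y)" by (simp add: image_image)
    also have "\<dots> = (\<lambda>z. z) ` orbit act (G y)"
      using GF orbit_sub[OF A Gy] by (intro image_cong) auto
    finally show "G ` orbit act' y = orbit act (G y)" by simp
  qed
  have cf: "continuous_map (orbit_space X act) (orbit_space X' act') (\<lambda>C. F ` C)"
    by (rule quot_cont[OF A A' Fc orbF])
  have cg: "continuous_map (orbit_space X' act') (orbit_space X act) (\<lambda>C. G ` C)"
    by (rule quot_cont[OF A' A Gc orbG])
  have gf: "G ` F ` C = C" if Co: "C \<in> orbits X act" for C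
  proof -
    obtain x where "x \<in> topspace X" "C = orbit act x" using Co orbits_iff[of C X act] by blast
    then have "C \<subseteq> topspace X" using orbit_sub[OF A] by simp
    then have "(\<lambda>z. G (F z)) ` C = (\<lambda>z. z) ` C" using GF by (intro image_cong) auto
    then show ?thesis by (simp add: image_image)
  qed
  have fg: "F ` G ` C = C" if Co: "C \<in> orbits X' act'" for C
  proof -
    obtain x where "x \<in> topspace X'" "C = orbit act' x" using Co orbits_iff[of C X' act'] by blast
    then have "C \<subseteq> topspace X'" using orbit_sub[OF A'] by simp
    then have "(\<lambda>z. F (G z)) ` C = (\<lambda>z. z) ` C" using FG by (intro image_cong) auto
    then show ?thesis by (simp add: image_image)
  qed
  have "homeomorphic_maps (orbit_space X act) (orbit_space X' act') (\<lambda>C. F ` C) (\<lambda>C. G ` C)"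
    unfolding homeomorphic_maps_def topspace_orbit_space[OF A] topspace_orbit_space[OF A']
  proof (intro conjI ballI)
    show "continuous_map (orbit_space X act) (orbit_space X' act') (\<lambda>C. F ` C)" by (rule cf)
    show "continuous_map (orbit_space X' act') (orbit_space X act) (\<lambda>C. G ` C)" by (rule cg)
    fix C assume "C \<in> orbits X act" then show "G ` F ` C = C" by (rule gf)
  next
    fix C assume "C \<in> orbits X' act'" then show "F ` G ` C = C" by (rule fg)
  qed
  then have hq: "homeomorphic_map (orbit_space X act) (orbit_space X' act') (\<lambda>C. F ` C)"
    using homeomorphic_maps_imp_map by blast
  have e1: "(\<lambda>C. F ` C) ` (orbit act ` fixed_points X act) = orbit act' ` fixed_points X' act'"
  proof
    show "(\<lambda>C. F ` C) ` (orbit act ` fixed_points X act) \<subseteq> orbit act' ` fixed_points X' act'"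
    proof
      fix D assume "D \<in> (\<lambda>C. F ` C) ` (orbit act ` fixed_points X act)"
      then obtain x where x: "x \<in> fixed_points X act" "D = F ` orbit act x" by blast
      have "D = orbit act' (F x)" using orbF fixed_in[OF x(1)] x(2) by simp
      moreover have "F x \<in> fixed_points X' act'" by (rule fixed_image[OF A A' Fm orbF x(1)])
      ultimately show "D \<in> orbit act' ` fixed_points X' act'" by blast
    qed
    show "orbit act' ` fixed_points X' act' \<subseteq> (\<lambda>C. F ` C) ` (orbit act ` fixed_points X act)"
    proof
      fix D assume "D \<in> orbit act' ` fixed_points X' act'"
      then obtain y where y: "y \<in> fixed_points X' act'" "D = orbit act' y" by blast
      have yt: "y \<in> topspace X'" by (rule fixed_in[OF y(1)])
      have Gy: "G y \<in> fixed_points X act" by (rule fixed_image[OF A' A Gm orbG y(1)])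
      have "F ` orbit act (G y) = orbit act' y" using orbF Gm yt FG by metis
      then show "D \<in> (\<lambda>C. F ` C) ` (orbit act ` fixed_points X act)" using Gy y(2) by blast
    qed
  qed
  have e2: "(\<lambda>C. F ` C) ` (orbits X act) = orbits X' act'"
  proof
    show "(\<lambda>C. F ` C) ` (orbits X act) \<subseteq> orbits X' act'"
      using continuous_map_image_subset_topspace[OF cf]
      unfolding topspace_orbit_space[OF A] topspace_orbit_space[OF A'] .
    show "orbits X' act' \<subseteq> (\<lambda>C. F ` C) ` (orbits X act)"
    proof
      fix D assume D: "D \<in> orbits X' act'"
      have "G ` D \<in> orbits X act"
        using continuous_map_image_subset_topspace[OF cg] D
        unfolding topspace_orbit_space[OF A] topspace_orbit_space[OF A'] by blast
      moreover have "F ` G ` D = D" by (rule fg[OF D])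
      ultimately show "D \<in> (\<lambda>C. F ` C) ` (orbits X act)" by (metis imageI)
    qed
  qed
  have "\<forall>i. (\<lambda>C. F ` C) ` orbit_filtration X act i = orbit_filtration X' act' i"
    unfolding orbit_filtration_def using e1 e2 by simp
  then show ?thesis unfolding stratified_homeo_def using hq by blast
qed

lemma torus_aut_id: "torus_aut (\<lambda>t. t)"
  unfolding torus_aut_def by (simp add: bij_betw_id[unfolded id_def] continuous_on_id)

theorem mainTheorem10:
  fixes X :: "'a topology" and act :: "complex \<Rightarrow> 'a \<Rightarrow> 'a"
    and X' :: "'b topology" and act' :: "complex \<Rightarrow> 'b \<Rightarrow> 'b"
  assumes "locally_standard_T1_over_2stratifold X act"
      and "locally_standard_T1_over_2stratifold X' act'"
      and "chern_class_zero X act"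
      and "chern_class_zero X' act'"
  shows "((\<exists>f. stratified_homeo (orbit_space X act) (orbit_filtration X act)
                                 (orbit_space X' act') (orbit_filtration X' act') f)
            \<longleftrightarrow> (\<exists>F. equiv_homeo X act X' act' F))
       \<and> ((\<exists>f. stratified_homeo (orbit_space X act) (orbit_filtration X act)
                                 (orbit_space X' act') (orbit_filtration X' act') f)
            \<longleftrightarrow> (\<exists>F. weak_equiv_homeo X act X' act' F))"
proof -
  have A: "U1_action X act" and H: "Hausdorff_space X"
    and SD: "\<forall>x\<in>topspace X. stabilizer act x = {1} \<or> stabilizer act x = U1"
    using assms(1) unfolding locally_standard_T1_over_2stratifold_def by blast+
  have A': "U1_action X' act'" and H': "Hausdorff_space X'"
    and SD': "\<forall>x\<in>topspace X'. stabilizer act' x = {1} \<or> stabilizer act' x = U1"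
    using assms(2) unfolding locally_standard_T1_over_2stratifold_def by blast+
  let ?S = "\<exists>f. stratified_homeo (orbit_space X act) (orbit_filtration X act)
                                 (orbit_space X' act') (orbit_filtration X' act') f"
  have SE: "?S \<Longrightarrow> \<exists>F. equiv_homeo X act X' act' F"
    using strat_to_equiv[OF A A' H H' SD SD' assms(3,4)] by blast
  have EW: "\<exists>F. weak_equiv_homeo X act X' act' F" if "equiv_homeo X act X' act' F" for F
  proof -
    have "weak_equiv_homeo X act X' act' F"
      using that torus_aut_id unfolding equiv_homeo_def weak_equiv_homeo_def by blast
    then show ?thesis by blast
  qed
  have WS: "?S" if "weak_equiv_homeo X act X' act' F" for F
    by (rule weak_to_strat[OF A A' that])
  show ?thesis using SE EW WS by blast
qed


end
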